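(* Let $0<\theta<\pi$ and $L\ge I(\theta)+\log 2$, where $I(\vartheta)=2\log\sec(\vartheta/2)$. Let $\triangle ABC$ be a geodesic triangle in hyperbolic space with $|CA|>L$, $|CB|>L$ and $\angle C=\pi-\theta$. Then (1) $\angle A+\angle B<e^{(-L+3\log2)/2}\sin(\theta/2)$; (2) $I(\theta)-\dfrac{e^{(-L+5\log 2)/2}\sin(\theta/2)}{L-\log 2}<|CA|+|CB|-|AB|<I(\theta)$. *)

theory Defs
  imports "HOL-Analysis.Analysis"
begin

text \<open>Hyperboloid model of hyperbolic n-space H^n inside Minkowski space R^(n,1),
  points written as (spatial part, time coordinate).\<close>

definition mink :: "((real^'n) \<times> real) \<Rightarrow> ((real^'n) \<times> real) \<Rightarrow> real" where
  "mink p q = fst p \<bullet> fst q - snd p * snd q"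

definition hyp_space :: "((real^'n) \<times> real) set" where
  "hyp_space = {p. mink p p = -1 \<and> snd p > 0}"

definition hdist :: "((real^'n) \<times> real) \<Rightarrow> ((real^'n) \<times> real) \<Rightarrow> real" where
  "hdist p q = arcosh (- mink p q)"

text \<open>Riemannian angle at vertex P between the geodesics from P to Q and from P to R:
  angle between the initial tangent vectors, obtained by projecting Q, R onto the
  tangent space at P (Minkowski-orthogonal complement of P).\<close>
definition hangle :: "((real^'n) \<times> real) \<Rightarrow> ((real^'n) \<times> real) \<Rightarrow> ((real^'n) \<times> real) \<Rightarrow> real" where
  "hangle P Q R =
     (let u = Q + mink Q P *\<^sub>R P; v = R + mink R P *\<^sub>R P
      in arccos (mink u v / sqrt (mink u u * mink v v)))"

definition Ifun :: "real \<Rightarrow> real" where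
  "Ifun \<theta> = 2 * ln (1 / cos (\<theta> / 2))"

end

theory Submission
  imports Defs
begin


lemma mink_sym: "mink p q = mink q p"
  by (simp add: mink_def inner_commute mult.commute)

lemma mink_add_left: "mink (p + q) r = mink p r + mink q r"
  by (simp add: mink_def inner_add_left algebra_simps)

lemma mink_scale_left: "mink (c *\<^sub>R p) r = c * mink p r"
  by (simp add: mink_def algebra_simps)

lemma mink_add_right: "mink r (p + q) = mink r p + mink r q"
  by (metis mink_sym mink_add_left)

lemma mink_scale_right: "mink r (c *\<^sub>R p) = c * mink r p"
  by (metis mink_sym mink_scale_left)

lemma hyp_rev:
  assumes "P \<in> hyp_space" "Q \<in> hyp_space"
  shows "- mink P Q \<ge> 1"
proof -
  obtain x s where P: "P = (x, s)" by (cases P)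
  obtain y t where Q: "Q = (y, t)" by (cases Q)
  have hs: "x \<bullet> x - s * s = -1" "s > 0" using assms(1) P by (auto simp: hyp_space_def mink_def)
  have ht: "y \<bullet> y - t * t = -1" "t > 0" using assms(2) Q by (auto simp: hyp_space_def mink_def)
  have xx: "x \<bullet> x = norm x ^ 2" by (simp add: power2_norm_eq_inner)
  have yy: "y \<bullet> y = norm y ^ 2" by (simp add: power2_norm_eq_inner)
  have cs: "x \<bullet> y \<le> norm x * norm y" by (rule norm_cauchy_schwarz)
  have s2: "s^2 = 1 + norm x ^2" using hs xx by (simp add: power2_eq_square)
  have t2: "t^2 = 1 + norm y ^2" using ht yy by (simp add: power2_eq_square)
  have "(s*t)^2 \<ge> (1 + norm x * norm y)^2"
  proof -
    have "(s*t)^2 = (1 + norm x ^2) * (1 + norm y ^2)" using s2 t2 by (simp add: power_mult_distrib)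
    moreover have "(1 + norm x ^2) * (1 + norm y ^2) - (1 + norm x * norm y)^2 = (norm x - norm y)^2"
      by (simp add: power2_eq_square algebra_simps)
    ultimately show ?thesis by (metis diff_ge_0_iff_ge zero_le_power2)
  qed
  hence "s*t \<ge> 1 + norm x * norm y"
    by (rule power2_le_imp_le) (use hs(2) ht(2) in \<open>simp add: less_imp_le\<close>)
  thus ?thesis using cs P Q by (simp add: mink_def)
qed

lemma psd:
  assumes "P \<in> hyp_space" "mink w P = 0"
  shows "mink w w \<ge> 0"
proof -
  obtain p s where P: "P = (p, s)" by (cases P)
  obtain x t where w: "w = (x, t)" by (cases w)
  have hs: "p \<bullet> p - s * s = -1" "s > 0" using assms(1) P by (auto simp: hyp_space_def mink_def)
  have o: "x \<bullet> p = t * s" using assms(2) P w by (simp add: mink_def)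
  have pp: "norm p < s"
  proof -
    have "norm p ^2 = p \<bullet> p" by (simp add: power2_norm_eq_inner)
    hence "norm p ^2 = s^2 - 1" using hs by (simp add: power2_eq_square)
    hence "norm p ^ 2 < s^2" by simp
    thus ?thesis using hs(2) by (meson abs_le_square_iff abs_of_pos less_le_not_le not_le norm_ge_zero power2_less_imp_less)
  qed
  have "\<bar>t\<bar> * s \<le> norm x * norm p"
    using o by (metis Cauchy_Schwarz_ineq2 abs_mult abs_of_pos hs(2))
  also have "\<dots> \<le> norm x * s" using pp by (simp add: mult_left_mono)
  finally have "\<bar>t\<bar> \<le> norm x" using hs(2) by simp
  hence "t^2 \<le> norm x ^ 2" by (metis abs_ge_zero power_mono power2_abs)
  moreover have "norm x ^ 2 = x \<bullet> x" by (simp add: power2_norm_eq_inner)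
  ultimately show ?thesis using w by (simp add: mink_def power2_eq_square)
qed

lemma quad_cs:
  fixes A B C :: real
  assumes "\<And>l. A + 2 * B * l + C * l^2 \<ge> 0" "C \<ge> 0"
  shows "B^2 \<le> A * C"
proof (cases "C = 0")
  case True
  have "B = 0"
  proof (rule ccontr)
    assume "B \<noteq> 0"
    have "A + 2 * B * (-(\<bar>A\<bar>+1)/(2*B)) + C * (-(\<bar>A\<bar>+1)/(2*B))^2 \<ge> 0" by (rule assms(1))
    moreover have "2 * B * (-(\<bar>A\<bar>+1)/(2*B)) = -(\<bar>A\<bar>+1)" using \<open>B \<noteq> 0\<close> by simp
    ultimately show False using True by simp
  qed
  thus ?thesis using True by simp
next
  case False
  hence C: "C > 0" using assms(2) by simp
  have "A + 2 * B * (-B/C) + C * (-B/C)^2 \<ge> 0" by (rule assms(1))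
  hence "A - B^2/C \<ge> 0" using C by (simp add: field_simps power2_eq_square)
  thus ?thesis using C by (simp add: field_simps)
qed

lemma mink_cs:
  assumes "P \<in> hyp_space" "mink u P = 0" "mink v P = 0"
  shows "(mink u v)^2 \<le> mink u u * mink v v"
proof (rule quad_cs)
  fix l
  have "mink (u + l *\<^sub>R v) P = 0" using assms by (simp add: mink_add_left mink_scale_left)
  hence "mink (u + l *\<^sub>R v) (u + l *\<^sub>R v) \<ge> 0" using psd assms(1) by blast
  thus "mink u u + 2 * mink u v * l + mink v v * l^2 \<ge> 0"
    by (simp add: mink_add_left mink_add_right mink_scale_left mink_scale_right mink_sym[of v u] power2_eq_square algebra_simps)
next
  show "mink v v \<ge> 0" using psd assms by blast
qed

lemma cosh_hdist:
  assumes "P \<in> hyp_space" "Q \<in> hyp_space"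
  shows "cosh (hdist P Q) = - mink P Q" "hdist P Q \<ge> 0"
  using hyp_rev[OF assms] by (auto simp: hdist_def)

lemma hdist_sym: "hdist P Q = hdist Q P"
  by (simp add: hdist_def mink_sym)

lemma mink_self: "P \<in> hyp_space \<Longrightarrow> mink P P = -1"
  by (simp add: hyp_space_def)

lemma hangle_eq:
  assumes "P \<in> hyp_space" "Q \<in> hyp_space" "R \<in> hyp_space"
  defines "x \<equiv> (cosh (hdist P Q) * cosh (hdist P R) - cosh (hdist Q R)) / (sinh (hdist P Q) * sinh (hdist P R))"
  shows "hangle P Q R = arccos x \<and> \<bar>x\<bar> \<le> 1"
proof -
  define u where "u = Q + mink Q P *\<^sub>R P"
  define v where "v = R + mink R P *\<^sub>R P"
  have PP: "mink P P = -1" using mink_self assms by blast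
  have uP: "mink u P = 0" unfolding u_def using PP by (simp add: mink_add_left mink_scale_left)
  have vP: "mink v P = 0" unfolding v_def using PP by (simp add: mink_add_left mink_scale_left)
  have uv: "mink u v = mink Q R + mink Q P * mink R P"
    unfolding u_def v_def using PP
    by (simp add: mink_add_left mink_add_right mink_scale_left mink_scale_right mink_sym[of P R] mink_sym[of P Q] algebra_simps)
  have uu: "mink u u = (mink Q P)^2 - 1"
    unfolding u_def using PP mink_self[OF assms(2)]
    by (simp add: mink_add_left mink_add_right mink_scale_left mink_scale_right mink_sym[of P Q] algebra_simps power2_eq_square)
  have vv: "mink v v = (mink R P)^2 - 1"
    unfolding v_def using PP mink_self[OF assms(3)]
    by (simp add: mink_add_left mink_add_right mink_scale_left mink_scale_right mink_sym[of P R] algebra_simps power2_eq_square)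
  have cq: "cosh (hdist P Q) = - mink Q P" using cosh_hdist[OF assms(1,2)] mink_sym by metis
  have cr: "cosh (hdist P R) = - mink R P" using cosh_hdist[OF assms(1,3)] mink_sym by metis
  have cd: "cosh (hdist Q R) = - mink Q R" using cosh_hdist[OF assms(2,3)] by metis
  have q0: "hdist P Q \<ge> 0" "hdist P R \<ge> 0" using cosh_hdist assms by blast+
  have sq: "sqrt (mink u u * mink v v) = sinh (hdist P Q) * sinh (hdist P R)"
  proof -
    have "mink u u * mink v v = (sinh (hdist P Q) * sinh (hdist P R))^2"
    proof -
      have "mink Q P = - cosh (hdist P Q)" "mink R P = - cosh (hdist P R)" using cq cr by simp_all
      thus ?thesis using uu vv by (simp add: power_mult_distrib cosh_square_eq)
    qed
    thus ?thesis using q0 by simp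
  qed
  have num: "mink u v = cosh (hdist P Q) * cosh (hdist P R) - cosh (hdist Q R)"
    using uv cq cr cd by simp
  have ang: "hangle P Q R = arccos x"
    unfolding hangle_def x_def Let_def using u_def v_def sq num by simp
  have cs: "(mink u v)^2 \<le> mink u u * mink v v" using mink_cs[OF assms(1) uP vP] .
  have "\<bar>x\<bar> \<le> 1"
  proof (cases "sqrt (mink u u * mink v v) = 0")
    case True hence "sinh (hdist P Q) * sinh (hdist P R) = 0" using sq by simp
    thus ?thesis unfolding x_def by (simp only: div_by_0)
  next
    case False
    have "sqrt ((mink u v)^2) \<le> sqrt (mink u u * mink v v)" using cs by (rule real_sqrt_le_mono)
    hence "\<bar>mink u v\<bar> \<le> sqrt (mink u u * mink v v)" by simp
    moreover have "sqrt (mink u u * mink v v) \<ge> 0" using sq q0 by simp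
    hence sp: "sqrt (mink u u * mink v v) > 0" using False by linarith
    ultimately have "\<bar>mink u v\<bar> / sqrt (mink u u * mink v v) \<le> 1"
      by (metis divide_le_eq_1_pos)
    moreover have "x = mink u v / sqrt (mink u u * mink v v)" unfolding x_def using sq num by simp
    ultimately show ?thesis using sp by (simp add: abs_divide)
  qed
  thus ?thesis using ang by simp
qed



lemma tan_ge_self:
  fixes x :: real
  assumes "0 \<le> x" "x < pi/2"
  shows "x \<le> tan x"
proof -
  have "(\<lambda>t. tan t - t) 0 \<le> (\<lambda>t. tan t - t) x"
  proof (rule DERIV_nonneg_imp_increasing_open[OF assms(1)])
    fix t assume t: "0 < t" "t < x"
    have ct: "cos t > 0" using t assms by (intro cos_gt_zero_pi) auto
    have "DERIV (\<lambda>t. tan t - t) t :> inverse ((cos t)\<^sup>2) - 1"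
      using ct by (auto intro!: derivative_eq_intros)
    moreover have "inverse ((cos t)\<^sup>2) - 1 \<ge> 0"
    proof -
      have "(cos t)\<^sup>2 \<le> 1" by (simp add: abs_square_le_1)
      moreover have "(cos t)\<^sup>2 > 0" using ct by simp
      ultimately show ?thesis by (simp add: one_le_inverse)
    qed
    ultimately show "\<exists>y. DERIV (\<lambda>t. tan t - t) t :> y \<and> y \<ge> 0" by blast
  next
    have "\<forall>t\<in>{0..x}. cos t \<noteq> 0" using assms
      by (metis atLeastAtMost_iff cos_gt_zero_pi less_eq_real_def linorder_not_le minus_less_iff neg_less_0_iff_less order_less_le_trans pi_half_gt_zero)
    thus "continuous_on {0..x} (\<lambda>t. tan t - t)"
      by (intro continuous_intros) auto
  qed
  thus ?thesis by simp
qed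



lemma cosh_exp: "cosh (x::real) = (exp x + 1 / exp x) / 2"
  by (simp add: cosh_field_def exp_minus field_simps)
lemma sinh_exp: "sinh (x::real) = (exp x - 1 / exp x) / 2"
  by (simp add: sinh_field_def exp_minus field_simps)

lemma dist_core:
  fixes a b c k L :: real
  assumes k: "0 < k" "k < 1" and E: "exp L \<ge> 2 / k" and ab: "a > L" "b > L" "L > 0"
    and c0: "c \<ge> 0"
    and hc: "cosh c = cosh a * cosh b + sinh a * sinh b * (2*k - 1)"
  shows "exp c > k * exp (a + b)"
    "exp c \<le> k * exp (a + b) + (1 - k) * (exp a / exp b + exp b / exp a)"
proof -
  define p where "p = exp a"
  define q where "q = exp b"
  define E where "E = exp L"
  define T where "T = p * q"
  define D where "D = (p / q + q / p) / 2"
  define X where "X = cosh c"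
  have p0: "p > E" "q > E" using ab unfolding p_def q_def E_def by auto
  have E2: "E \<ge> 2 / k" using E unfolding E_def .
  have kE: "k * E \<ge> 2" using E2 k by (simp add: divide_le_eq algebra_simps)
  have Epos: "E > 0" unfolding E_def by simp
  have "k * E \<le> E" using k Epos by (simp add: mult_le_cancel_right1)
  hence E1: "E \<ge> 2" using kE by linarith
  have pp: "p > 0" "q > 0" using p0 E1 by auto
  have T1: "T > 1"
  proof -
    have "p * q > 1 * 1" using p0 E1 by (intro mult_strict_mono) auto
    thus ?thesis unfolding T_def by simp
  qed
  have kT: "k * T > 1"
  proof -
    have "T \<ge> E * E" unfolding T_def using p0 E1 by (intro mult_mono) auto
    hence "k * T \<ge> k * E * E" using k by (simp add: mult.assoc)
    also have "k * E * E \<ge> 2 * 2" using kE E1 by (intro mult_mono) auto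
    finally show ?thesis by simp
  qed
  have Xe: "X = k * (T + 1/T) / 2 + (1 - k) * D"
  proof -
    have "X = cosh a * cosh b + sinh a * sinh b * (2*k - 1)" using hc X_def by simp
    also have "\<dots> = ((p + 1/p)/2) * ((q + 1/q)/2) + ((p - 1/p)/2) * ((q - 1/q)/2) * (2*k - 1)"
      unfolding cosh_exp[of a] cosh_exp[of b] sinh_exp[of a] sinh_exp[of b] p_def q_def ..
    also have "\<dots> = k * (T + 1/T) / 2 + (1 - k) * D"
      unfolding T_def D_def using pp by (simp add: field_simps)
    finally show ?thesis .
  qed
  have D1: "D \<ge> 1"
  proof -
    have "p / q + q / p - 2 = (p - q)^2 / (p * q)" using pp by (simp add: field_simps power2_eq_square)
    moreover have "(p - q)^2 / (p * q) \<ge> 0" using pp by simp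
    ultimately show ?thesis unfolding D_def by simp
  qed
  have TT: "T + 1/T > 2"
  proof -
    have "T + 1/T - 2 = (T - 1)^2 / T" using T1 by (simp add: field_simps power2_eq_square)
    moreover have "(T - 1)^2 / T > 0" using T1 by simp
    ultimately show ?thesis by linarith
  qed
  have X1: "X > 1"
  proof -
    have "k * (T + 1/T) / 2 > k" using TT k by simp
    moreover have "(1 - k) * D \<ge> 1 - k" using D1 k by simp
    ultimately show ?thesis using Xe by linarith
  qed
  have sc: "sinh c \<ge> 0" "(sinh c)^2 = X^2 - 1" using c0 unfolding X_def by (auto simp: cosh_square_eq)
  have ec: "exp c = X + sinh c" unfolding X_def by (simp add: cosh_plus_sinh)
  have scp: "sinh c > 0"
  proof -
    have "X^2 > 1" using X1 by (simp add: one_less_power)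
    hence "(sinh c)^2 > 0" using sc by linarith
    thus ?thesis using sc(1) by (metis less_eq_real_def power_zero_numeral)
  qed
  have "exp c > k * T"
  proof (cases "k * T \<le> X")
    case True thus ?thesis using ec scp True by linarith
  next
    case False
    have "2 * k * T * X \<ge> 2 * k * T * (k * (T + 1/T) / 2 + (1 - k))"
      using Xe D1 k T1 by (intro mult_left_mono) (auto simp: mult_left_mono)
    also have "2 * k * T * (k * (T + 1/T) / 2 + (1 - k)) = k^2 * T^2 + k^2 + 2 * k * T * (1 - k)"
      using T1 by (simp add: field_simps power2_eq_square)
    finally have h1: "2 * k * T * X \<ge> k^2 * T^2 + k^2 + 2 * k * T * (1 - k)" .
    have "k^2 + 2 * k * T * (1 - k) - 1 = (1 - k) * (2 * (k * T) - 1 - k)" by (simp add: algebra_simps power2_eq_square)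
    moreover have "(1 - k) * (2 * (k * T) - 1 - k) > 0" using k kT by (intro mult_pos_pos) auto
    ultimately have "2 * k * T * X > 1 + k^2 * T^2" using h1 by linarith
    hence "(k * T - X)^2 < (sinh c)^2" using sc by (simp add: power2_eq_square algebra_simps)
    hence "k * T - X < sinh c" using sc(1) by (rule power2_less_imp_less)
    thus ?thesis using ec by simp
  qed
  thus "exp c > k * exp (a + b)" unfolding T_def p_def q_def by (simp add: exp_add)
  have kT1: "k / T \<le> 1" using k T1 by simp
  have "sinh c \<le> X - k / T"
  proof -
    have "2 * D / T = 1/p^2 + 1/q^2" unfolding D_def T_def using pp by (simp add: field_simps power2_eq_square)
    moreover have "1/p^2 \<le> 1" "1/q^2 \<le> 1" using p0 E1 by (auto simp: power_le_one_iff)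
    ultimately have d2: "2 * D / T \<le> 2" by linarith
    have "2 * k * D / T = k * (2 * D / T)" by simp
    also have "\<dots> \<le> k * 2" using k d2 by (intro mult_left_mono) auto
    finally have "2 * k * D / T \<le> 1 + k" using k by linarith
    hence h: "(1 - k) * (2 * k * D / T) \<le> (1 - k) * (1 + k)" using k by (intro mult_left_mono) auto
    have "2 * X * k / T = k^2 * (1 + 1/T^2) + (1 - k) * (2 * k * D / T)"
      unfolding Xe using T1 by (simp add: field_simps power2_eq_square)
    hence "2 * X * k / T \<le> 1 + k^2 / T^2" using h by (simp add: algebra_simps power2_eq_square)
    hence "(sinh c)^2 \<le> (X - k/T)^2" using sc by (simp add: power2_eq_square algebra_simps)
    moreover have "X - k / T \<ge> 0" using X1 kT1 by linarith
    ultimately show ?thesis using power2_le_imp_le by blast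
  qed
  hence "exp c \<le> 2 * X - k / T" using ec by simp
  also have "2 * X - k / T = k * T + (1 - k) * (p / q + q / p)"
    unfolding Xe D_def using T1 by (simp add: field_simps)
  finally show "exp c \<le> k * exp (a + b) + (1 - k) * (exp a / exp b + exp b / exp a)"
    unfolding T_def p_def q_def by (simp add: exp_add)
qed



lemma theta_facts:
  fixes \<theta> L :: real
  assumes "0 < \<theta>" "\<theta> < pi" "L \<ge> Ifun \<theta> + ln 2"
  shows "0 < cos (\<theta>/2)" "0 < sin (\<theta>/2)" "(cos (\<theta>/2))^2 < 1"
    "cos \<theta> = 2 * (cos (\<theta>/2))^2 - 1" "sin \<theta> = 2 * sin (\<theta>/2) * cos (\<theta>/2)"
    "(sin (\<theta>/2))^2 = 1 - (cos (\<theta>/2))^2"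
    "Ifun \<theta> = - ln ((cos (\<theta>/2))^2)" "exp L \<ge> 2 / (cos (\<theta>/2))^2" "L > ln 2"
proof -
  show co: "0 < cos (\<theta>/2)" using assms by (intro cos_gt_zero_pi) auto
  show s: "0 < sin (\<theta>/2)" using assms by (intro sin_gt_zero) auto
  show s2: "(sin (\<theta>/2))^2 = 1 - (cos (\<theta>/2))^2" by (simp add: sin_squared_eq)
  moreover have "(sin (\<theta>/2))^2 > 0" using s by simp
  ultimately show k1: "(cos (\<theta>/2))^2 < 1" by linarith
  show "cos \<theta> = 2 * (cos (\<theta>/2))^2 - 1" using cos_double_cos[of "\<theta>/2"] by simp
  show "sin \<theta> = 2 * sin (\<theta>/2) * cos (\<theta>/2)" using sin_double[of "\<theta>/2"] by simp
  show I: "Ifun \<theta> = - ln ((cos (\<theta>/2))^2)"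
    unfolding Ifun_def using co by (simp add: ln_div ln_realpow)
  have "L \<ge> ln 2 - ln ((cos (\<theta>/2))^2)" using assms(3) I by simp
  also have "ln 2 - ln ((cos (\<theta>/2))^2) = ln (2 / (cos (\<theta>/2))^2)" using co by (simp add: ln_div)
  finally have "exp (ln (2 / (cos (\<theta>/2))^2)) \<le> exp L" by simp
  thus "exp L \<ge> 2 / (cos (\<theta>/2))^2" using co by simp
  have "ln ((cos (\<theta>/2))^2) < 0" using co k1 by simp
  thus "L > ln 2" using assms(3) I by simp
qed

lemma real_dist:
  fixes a b c \<theta> L :: real
  assumes th: "0 < \<theta>" "\<theta> < pi" and hL: "L \<ge> Ifun \<theta> + ln 2" and ab: "a > L" "b > L"
    and c0: "c \<ge> 0"
    and hc: "cosh c = cosh a * cosh b + sinh a * sinh b * cos \<theta>"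
  shows "Ifun \<theta> - exp ((- L + 5 * ln 2) / 2) * sin (\<theta> / 2) / (L - ln 2) < b + a - c"
    "b + a - c < Ifun \<theta>"
proof -
  note tf = theta_facts[OF th hL]
  define k where "k = (cos (\<theta>/2))^2"
  define s where "s = sin (\<theta>/2)"
  define E where "E = exp L"
  define p where "p = exp a"
  define q where "q = exp b"
  have k: "0 < k" "k < 1" using tf unfolding k_def by auto
  have s: "0 < s" "s^2 = 1 - k" using tf unfolding k_def s_def by auto
  have E: "E \<ge> 2 / k" using tf unfolding k_def E_def by auto
  have L2: "L > ln 2" using tf by simp
  have L0: "L > 0" using L2 using ln_gt_zero[of "2::real"] by linarith
  have I: "Ifun \<theta> = - ln k" using tf unfolding k_def by simp
  have hc': "cosh c = cosh a * cosh b + sinh a * sinh b * (2*k - 1)" using hc tf unfolding k_def by simp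
  note dc = dist_core[OF k E[unfolded E_def] ab L0 c0 hc']
  have pp: "p > E" "q > E" using ab unfolding p_def q_def E_def by auto
  have Epos: "E > 0" unfolding E_def by simp
  have "ln (k * exp (a + b)) < c" using dc(1) k by (metis exp_gt_zero ln_less_cancel_iff ln_exp mult_pos_pos)
  moreover have "ln (k * exp (a + b)) = ln k + a + b" using k by (simp add: ln_mult)
  ultimately show "b + a - c < Ifun \<theta>" using I by simp
  define m where "m = (1 - k) / k"
  have "exp c / (k * (p * q)) \<le> (k * (p * q) + (1 - k) * (p / q + q / p)) / (k * (p * q))"
    using dc(2) k pp Epos unfolding p_def q_def by (simp add: exp_add divide_right_mono)
  also have "\<dots> = 1 + m * (1 / p^2 + 1 / q^2)"
    unfolding m_def using k pp Epos by (simp add: field_simps power2_eq_square)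
  finally have r1: "exp c / (k * (p * q)) \<le> 1 + m * (1 / p^2 + 1 / q^2)" .
  have lnr: "ln (exp c / (k * (p * q))) = c - ln k - a - b"
    using k unfolding p_def q_def by (simp add: ln_div ln_mult)
  have "ln (exp c / (k * (p * q))) \<le> exp c / (k * (p * q)) - 1"
    using k pp Epos by (intro ln_le_minus_one) simp
  hence r2: "c - ln k - a - b \<le> m * (1 / p^2 + 1 / q^2)" using r1 lnr by simp
  have m0: "m > 0" unfolding m_def using k by simp
  have "1 / p^2 < 1 / E^2" "1 / q^2 < 1 / E^2" using pp Epos
    by (auto intro!: divide_strict_left_mono power_strict_mono)
  hence "1 / p^2 + 1 / q^2 < 2 / E^2" by simp
  hence "m * (1 / p^2 + 1 / q^2) < m * (2 / E^2)" using m0 by (rule mult_strict_left_mono)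
  with r2 have r3: "c - ln k - a - b < m * (2 / E^2)" by simp
  define R where "R = exp ((- L + 5 * ln 2) / 2)"
  have mE: "m \<le> s^2 * E / 2"
  proof -
    have "m = s^2 * (1 / k)" unfolding m_def using s by simp
    also have "\<dots> \<le> s^2 * (E / 2)" using E by (intro mult_left_mono) auto
    finally show ?thesis by simp
  qed
  have "m * (2 / E^2) \<le> (s^2 * E / 2) * (2 / E^2)" using mE Epos by (intro mult_right_mono) auto
  also have "\<dots> = s^2 / E" using Epos by (simp add: field_simps power2_eq_square)
  finally have r4: "m * (2 / E^2) \<le> s^2 / E" .
  have Lexp: "L \<le> 2 * exp (L / 2)" using exp_ge_add_one_self[of "L/2"] by linarith
  have RR: "R = exp (- L / 2) * exp (5 * ln 2 / 2)" unfolding R_def by (simp add: exp_add[symmetric] field_simps)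
  have "exp (5 * ln 2 / 2) \<ge> exp (ln (2::real))" by (subst exp_le_cancel_iff) simp
  hence R2: "R \<ge> 2 * exp (- L / 2)" unfolding RR by simp
  have "s^2 / E * (L - ln 2) \<le> s^2 / E * L" using s k Epos L2 by (intro mult_left_mono) auto
  also have "\<dots> \<le> s / E * (2 * exp (L / 2))"
  proof -
    have "s^2 < 1" using s k by simp
    hence "s < 1" using s by (metis abs_square_less_1 abs_of_pos)
    hence "s * s \<le> s * 1" using s by (intro mult_left_mono) auto
    hence "s^2 \<le> s" by (simp add: power2_eq_square)
    hence "s^2 / E * L \<le> s / E * L" using Epos L0 by (intro mult_right_mono divide_right_mono) auto
    also have "\<dots> \<le> s / E * (2 * exp (L / 2))" using Lexp s Epos by (intro mult_left_mono) auto
    finally show ?thesis .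
  qed
  also have "s / E * (2 * exp (L / 2)) = s * (2 * exp (- L / 2))"
    unfolding E_def by (simp add: field_simps exp_add[symmetric] exp_minus)
  also have "\<dots> \<le> s * R" using R2 s by (intro mult_left_mono) auto
  finally have r5: "s^2 / E * (L - ln 2) \<le> s * R" .
  have "c - ln k - a - b < s^2 / E" using r3 r4 by simp
  hence "(c - ln k - a - b) * (L - ln 2) < s^2 / E * (L - ln 2)" using L2 by (intro mult_strict_right_mono) auto
  with r5 have "(c - ln k - a - b) * (L - ln 2) < s * R" by simp
  hence "c - ln k - a - b < s * R / (L - ln 2)" using L2 by (simp add: pos_less_divide_eq)
  thus "Ifun \<theta> - exp ((- L + 5 * ln 2) / 2) * sin (\<theta> / 2) / (L - ln 2) < b + a - c"
    using I unfolding R_def s_def by (simp add: mult.commute)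
qed



lemma id1:
  fixes ca cb sa sb ct cc sc st :: real
  assumes "ca^2 = sa^2 + 1" "cb^2 = sb^2 + 1" "cc^2 = sc^2 + 1" "st^2 = 1 - ct^2"
    "cc = ca * cb + sa * sb * ct"
  shows "sc^2 * sb^2 - (cc * cb - ca)^2 = st^2 * sa^2 * sb^2"
  using assms by algebra

lemma id2:
  fixes ca cb sa sb ct cc k :: real
  assumes "ca^2 = sa^2 + 1" "cb^2 = sb^2 + 1" "ct = 2*k - 1"
    "cc = ca * cb + sa * sb * ct"
  shows "sa * (cc * cb - ca) + sb * (cc * ca - cb) = 2 * k * sa * sb * (sa * cb + ca * sb)"
  using assms by algebra

lemma sin_arccos_tri:
  fixes a b c st ct :: real
  assumes "a > 0" "b > 0" "c > 0" "st > 0" "st^2 = 1 - ct^2"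
    "cosh c = cosh a * cosh b + sinh a * sinh b * ct"
    "\<bar>(cosh c * cosh b - cosh a) / (sinh c * sinh b)\<bar> \<le> 1"
  shows "sin (arccos ((cosh c * cosh b - cosh a) / (sinh c * sinh b))) = st * sinh a / sinh c"
proof -
  define x where "x = (cosh c * cosh b - cosh a) / (sinh c * sinh b)"
  have pos: "sinh a > 0" "sinh b > 0" "sinh c > 0" using assms by auto
  have "sinh c^2 * sinh b^2 - (cosh c * cosh b - cosh a)^2 = st^2 * sinh a^2 * sinh b^2"
    by (rule id1[OF cosh_square_eq cosh_square_eq cosh_square_eq assms(5) assms(6)])
  hence "1 - x^2 = (st * sinh a / sinh c)^2"
    unfolding x_def using pos by (simp add: field_simps power2_eq_square)
  hence "sin (arccos x) = sqrt ((st * sinh a / sinh c)^2)"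
    using assms(7) unfolding x_def by (simp add: sin_arccos_abs)
  also have "\<dots> = st * sinh a / sinh c" using pos assms(4) by simp
  finally show ?thesis unfolding x_def .
qed

lemma real_angle:
  fixes a b c \<theta> L :: real
  assumes th: "0 < \<theta>" "\<theta> < pi" and hL: "L \<ge> Ifun \<theta> + ln 2" and ab: "a > L" "b > L"
    and c0: "c \<ge> 0"
    and hc: "cosh c = cosh a * cosh b + sinh a * sinh b * cos \<theta>"
    and xa: "\<bar>(cosh c * cosh b - cosh a) / (sinh c * sinh b)\<bar> \<le> 1"
    and xb: "\<bar>(cosh c * cosh a - cosh b) / (sinh c * sinh a)\<bar> \<le> 1"
  shows "arccos ((cosh c * cosh b - cosh a) / (sinh c * sinh b))
       + arccos ((cosh c * cosh a - cosh b) / (sinh c * sinh a))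
       < exp ((- L + 3 * ln 2) / 2) * sin (\<theta> / 2)"
proof -
  note tf = theta_facts[OF th hL]
  define co where "co = cos (\<theta>/2)"
  define k where "k = co^2"
  define s where "s = sin (\<theta>/2)"
  define E where "E = exp L"
  define p where "p = exp a"
  define q where "q = exp b"
  define xa' where "xa' = (cosh c * cosh b - cosh a) / (sinh c * sinh b)"
  define xb' where "xb' = (cosh c * cosh a - cosh b) / (sinh c * sinh a)"
  define \<alpha> where "\<alpha> = arccos xa'"
  define \<beta> where "\<beta> = arccos xb'"
  have co: "0 < co" unfolding co_def using tf by simp
  have k: "0 < k" "k < 1" using tf unfolding k_def co_def by auto
  have s: "0 < s" using tf unfolding s_def by auto
  have E: "E \<ge> 2 / k" using tf unfolding k_def co_def E_def by auto
  have L2: "L > ln 2" using tf by simp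
  have L0: "L > 0" using L2 using ln_gt_zero[of "2::real"] by linarith
  have I: "Ifun \<theta> = - ln k" using tf unfolding k_def co_def by simp
  have ct: "cos \<theta> = 2*k - 1" using tf unfolding k_def co_def by simp
  have st: "sin \<theta> = 2 * s * co" using tf unfolding s_def co_def by simp
  have st2: "(sin \<theta>)^2 = 1 - (cos \<theta>)^2" by (simp add: sin_squared_eq)
  have stp: "sin \<theta> > 0" using st s co by simp
  have hc': "cosh c = cosh a * cosh b + sinh a * sinh b * (2*k - 1)" using hc ct by simp
  note dc = dist_core[OF k E[unfolded E_def] ab L0 c0 hc']
  have a0: "a > 0" "b > 0" using ab L0 by auto
  have "ln (k * exp (a + b)) < c" using dc(1) k by (metis exp_gt_zero ln_less_cancel_iff ln_exp mult_pos_pos)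
  moreover have "ln (k * exp (a + b)) = ln k + a + b" using k by (simp add: ln_mult)
  ultimately have cab: "c > ln k + a + b" by simp
  have "- ln k < L" using hL I L2 using ln_gt_zero[of "2::real"] by linarith
  hence ca: "c > a" "c > b" using cab ab by auto
  have cpos: "c > 0" using ca a0 by simp
  have sh: "sinh a > 0" "sinh b > 0" "sinh c > 0" using a0 cpos by auto
  have ch1: "cosh a > 1" "cosh b > 1"
    using cosh_real_nonneg_less_iff[of 0 a] cosh_real_nonneg_less_iff[of 0 b] a0 by auto
  have chc: "cosh c > cosh a" "cosh c > cosh b"
    using cosh_real_nonneg_less_iff[of a c] cosh_real_nonneg_less_iff[of b c] a0 ca by auto
  have na: "cosh c * cosh b - cosh a > 0"
  proof -
    have "cosh c * cosh b > cosh c * 1" using ch1 chc by (intro mult_strict_left_mono) auto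
    thus ?thesis using chc by linarith
  qed
  have nb: "cosh c * cosh a - cosh b > 0"
  proof -
    have "cosh c * cosh a > cosh c * 1" using ch1 chc by (intro mult_strict_left_mono) auto
    thus ?thesis using chc by linarith
  qed
  have xap: "xa' > 0" unfolding xa'_def using na sh by simp
  have xbp: "xb' > 0" unfolding xb'_def using nb sh by simp
  have xa1: "xa' \<le> 1" "xb' \<le> 1" using xa xb unfolding xa'_def[symmetric] xb'_def[symmetric] by auto
  have al: "0 \<le> \<alpha>" "\<alpha> < pi/2" "cos \<alpha> = xa'" unfolding \<alpha>_def
    using xap xa1 arccos_less_arccos[of 0 xa'] by (auto intro: arccos_lbound)
  have be: "0 \<le> \<beta>" "\<beta> < pi/2" "cos \<beta> = xb'" unfolding \<beta>_def
    using xbp xa1 arccos_less_arccos[of 0 xb'] by (auto intro: arccos_lbound)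
  have sa: "sin \<alpha> = sin \<theta> * sinh a / sinh c"
    unfolding \<alpha>_def xa'_def by (rule sin_arccos_tri[OF a0 cpos stp st2 hc xa])
  have hc2: "cosh c = cosh b * cosh a + sinh b * sinh a * cos \<theta>" using hc by (simp add: algebra_simps)
  have sb: "sin \<beta> = sin \<theta> * sinh b / sinh c"
    unfolding \<beta>_def xb'_def by (rule sin_arccos_tri[OF a0(2) a0(1) cpos stp st2 hc2 xb])
  define S where "S = sin \<alpha> + sin \<beta>"
  define Cc where "Cc = cos \<alpha> + cos \<beta>"
  have S: "S = sin \<theta> * (sinh a + sinh b) / sinh c" unfolding S_def sa sb by (simp add: add_divide_distrib distrib_left)
  have idd: "sinh a * (cosh c * cosh b - cosh a) + sinh b * (cosh c * cosh a - cosh b)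
       = 2 * k * sinh a * sinh b * (sinh a * cosh b + cosh a * sinh b)"
    by (rule id2[OF cosh_square_eq cosh_square_eq _ hc]) (simp add: ct)
  have Cc: "Cc = 2 * k * sinh (a + b) / sinh c"
  proof -
    have "Cc = (sinh a * (cosh c * cosh b - cosh a) + sinh b * (cosh c * cosh a - cosh b)) / (sinh a * sinh b * sinh c)"
      unfolding Cc_def al(3) be(3) xa'_def xb'_def using sh by (simp add: field_simps)
    also have "\<dots> = 2 * k * sinh (a + b) / sinh c"
      unfolding idd sinh_add using sh by (simp add: field_simps)
    finally show ?thesis .
  qed
  have Ccp: "Cc > 0" unfolding Cc using k sh a0 by simp
  define \<phi> where "\<phi> = (\<alpha> + \<beta>) / 2"
  have ph: "0 \<le> \<phi>" "\<phi> < pi/2" unfolding \<phi>_def using al be by auto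
  have cph: "cos \<phi> > 0" using ph by (intro cos_gt_zero_pi) auto
  have pb: "\<phi> - \<beta> = - (\<phi> - \<alpha>)" unfolding \<phi>_def by (simp add: field_simps)
  have "sin \<phi> * Cc - cos \<phi> * S = sin (\<phi> - \<alpha>) + sin (\<phi> - \<beta>)"
    unfolding Cc_def S_def sin_diff by (simp add: algebra_simps)
  moreover have "sin (\<phi> - \<beta>) = - sin (\<phi> - \<alpha>)" unfolding pb by (rule sin_minus)
  ultimately have "sin \<phi> * Cc = cos \<phi> * S" by linarith
  hence tph: "tan \<phi> = S / Cc" using cph Ccp by (simp add: tan_def field_simps)
  also have "\<dots> = sin \<theta> * (sinh a + sinh b) / (2 * k * sinh (a + b))"
    unfolding S Cc using sh k by (simp add: field_simps)
  also have "\<dots> = s / co * ((sinh a + sinh b) / sinh (a + b))"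
    unfolding st k_def using co a0 sinh_real_pos_iff[of "a+b"] by (simp add: field_simps power2_eq_square)
  finally have tph2: "tan \<phi> = s / co * ((sinh a + sinh b) / sinh (a + b))" .
  have pp: "p > E" "q > E" using ab unfolding p_def q_def E_def by auto
  have Epos: "E > 0" unfolding E_def by simp
  have E1: "E > 1" using L0 unfolding E_def by simp
  have rat: "(sinh a + sinh b) / sinh (a + b) < 1/p + 1/q"
  proof -
    have sab: "sinh (a + b) > 0" using a0 by simp
    have "sinh a + sinh b < (1/p + 1/q) * sinh (a + b)"
    proof -
      have eq: "(1/p + 1/q) * sinh (a + b) - (sinh a + sinh b) = (1/p + 1/q) * (1 - 1/(p*q)) / 2 "
        unfolding sinh_exp exp_add p_def[symmetric] q_def[symmetric] using pp Epos
        by (simp add: field_simps)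
      have "1/(p*q) < 1"
      proof -
        have "p*q > 1*1" using pp E1 by (intro mult_strict_mono) auto
        thus ?thesis by simp
      qed
      moreover have "1/p + 1/q > 0" using pp Epos by (simp add: add_pos_pos)
      ultimately have "(1/p + 1/q) * (1 - 1/(p*q)) > 0" by (intro mult_pos_pos) auto
      hence "(1/p + 1/q) * (1 - 1/(p*q)) / 2 > 0" by simp
      hence "(1/p + 1/q) * sinh (a + b) - (sinh a + sinh b) > 0" unfolding eq .
      thus ?thesis by simp
    qed
    thus ?thesis using sab by (simp add: pos_divide_less_eq)
  qed
  have "1/p < 1/E" "1/q < 1/E" using pp Epos by (auto intro!: divide_strict_left_mono)
  hence "1/p + 1/q < 2 / E" by simp
  hence "(sinh a + sinh b) / sinh (a + b) < 2 / E" using rat by simp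
  hence tp: "tan \<phi> < s / co * (2 / E)" unfolding tph2 using s co by (intro mult_strict_left_mono) auto
  define R where "R = exp ((- L + 3 * ln 2) / 2)"
  have R2: "R^2 = 8 / E"
  proof -
    have hh: "(-L + 3*ln 2)/2 + (-L + 3*ln 2)/2 = -L + 3*ln 2" by simp
    have "R^2 = exp ((-L + 3*ln 2)/2 + (-L + 3*ln 2)/2)" unfolding R_def power2_eq_square exp_add ..
    also have "\<dots> = exp (- L + 3 * ln 2)" unfolding hh ..
    also have "\<dots> = exp (- L) * exp (3 * ln 2)" by (rule exp_add)
    also have "3 * ln (2::real) = ln 8" using ln_realpow[of 2 3] by simp
    hence "exp (3 * ln 2) = (8::real)" by simp
    finally show ?thesis unfolding E_def by (simp add: exp_minus field_simps)
  qed
  have "(4 / (co * E))^2 \<le> R^2"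
  proof -
    have "(4 / (co * E))^2 = 16 / (k * E^2)" unfolding k_def by (simp add: power2_eq_square field_simps)
    also have "\<dots> \<le> 8 / E"
    proof -
      have "k * E \<ge> 2" using E k by (simp add: divide_le_eq algebra_simps)
      thus ?thesis using k Epos by (simp add: field_simps power2_eq_square)
    qed
    finally show ?thesis using R2 by simp
  qed
  hence R4: "4 / (co * E) \<le> R" unfolding R_def by (rule power2_le_imp_le) simp
  have "\<alpha> + \<beta> = 2 * \<phi>" unfolding \<phi>_def by simp
  also have "\<dots> \<le> 2 * tan \<phi>" using tan_ge_self[OF ph] by simp
  also have "\<dots> < 2 * (s / co * (2 / E))" using tp by simp
  also have "\<dots> = s * (4 / (co * E))" by (simp add: field_simps)
  also have "\<dots> \<le> s * R" using R4 s by (intro mult_left_mono) auto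
  finally show ?thesis unfolding \<alpha>_def \<beta>_def xa'_def xb'_def R_def s_def by (simp add: mult.commute)
qed


theorem mainTheorem11:
  fixes A B C :: "(real^'n) \<times> real" and \<theta> L :: real
  assumes "0 < \<theta>" and "\<theta> < pi"
    and "L \<ge> Ifun \<theta> + ln 2"
    and "A \<in> hyp_space" and "B \<in> hyp_space" and "C \<in> hyp_space"
    and "hdist C A > L" and "hdist C B > L"
    and "hangle C A B = pi - \<theta>"
  shows "hangle A B C + hangle B A C < exp ((- L + 3 * ln 2) / 2) * sin (\<theta> / 2)
    \<and> Ifun \<theta> - exp ((- L + 5 * ln 2) / 2) * sin (\<theta> / 2) / (L - ln 2)
           < hdist C A + hdist C B - hdist A B
    \<and> hdist C A + hdist C B - hdist A B < Ifun \<theta>"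
proof -
  define a where "a = hdist C B"
  define b where "b = hdist C A"
  define c where "c = hdist A B"
  note tf = theta_facts[OF assms(1,2,3)]
  have L0: "L > 0" using tf(9) using ln_gt_zero[of "2::real"] by linarith
  have ab: "a > L" "b > L" unfolding a_def b_def using assms by auto
  have c0: "c \<ge> 0" unfolding c_def using cosh_hdist(2)[OF assms(4,5)] .
  have sh: "sinh a > 0" "sinh b > 0" using ab L0 by auto
  have s1: "hdist A C = b" "hdist B C = a" "hdist B A = c" unfolding a_def b_def c_def by (simp_all add: hdist_sym)
  have hC: "hangle C A B = arccos ((cosh b * cosh a - cosh c) / (sinh b * sinh a))
      \<and> \<bar>(cosh b * cosh a - cosh c) / (sinh b * sinh a)\<bar> \<le> 1"
    using hangle_eq[OF assms(6,4,5)] unfolding a_def b_def c_def .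
  have hA: "hangle A B C = arccos ((cosh c * cosh b - cosh a) / (sinh c * sinh b))
      \<and> \<bar>(cosh c * cosh b - cosh a) / (sinh c * sinh b)\<bar> \<le> 1"
    using hangle_eq[OF assms(4,5,6)] unfolding s1 c_def[symmetric] .
  have hB: "hangle B A C = arccos ((cosh c * cosh a - cosh b) / (sinh c * sinh a))
      \<and> \<bar>(cosh c * cosh a - cosh b) / (sinh c * sinh a)\<bar> \<le> 1"
    using hangle_eq[OF assms(5,4,6)] unfolding s1 b_def[symmetric] .
  have "cos (pi - \<theta>) = (cosh b * cosh a - cosh c) / (sinh b * sinh a)"
    using hC assms(9) by (metis cos_arccos_abs)
  hence "- cos \<theta> * (sinh b * sinh a) = cosh b * cosh a - cosh c" using sh by (simp add: field_simps)
  hence hc: "cosh c = cosh a * cosh b + sinh a * sinh b * cos \<theta>" by (simp add: algebra_simps)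
  have d: "Ifun \<theta> - exp ((- L + 5 * ln 2) / 2) * sin (\<theta> / 2) / (L - ln 2) < b + a - c"
    "b + a - c < Ifun \<theta>" using real_dist[OF assms(1,2,3) ab c0 hc] by auto
  have an: "hangle A B C + hangle B A C < exp ((- L + 3 * ln 2) / 2) * sin (\<theta> / 2)"
    using real_angle[OF assms(1,2,3) ab c0 hc hA[THEN conjunct2] hB[THEN conjunct2]] hA hB by simp
  show ?thesis using d an unfolding a_def b_def c_def by simp
qed

end
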